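(* Let $\Gamma$ be a group and $S$ a $\Gamma$-graded semigroup. Then there is a $\Gamma$-graded pointed set $X$ and an injective semigroup homomorphism $\psi:S\to\mathcal{T}^{\mathrm{gr}}(X)$ such that $\psi(S_\alpha)\subseteq\mathcal{T}(X)_\alpha$ for all $\alpha\in\Gamma$.
   Context: Semigroups have a zero; $S$ is $\Gamma$-graded via $\deg:S\setminus\{0\}\to\Gamma$ with $\deg(st)=\deg(s)\deg(t)$ when $st\neq0$, $S_\alpha=\deg^{-1}(\alpha)\cup\{0\}$. A pointed set $X$ (with distinguished $0_X$) is $\Gamma$-graded if there is a map $\phi:X\setminus\{0_X\}\to\Gamma$; $X_\alpha=\phi^{-1}(\alpha)\cup\{0_X\}$. $\mathcal T'(X)$ is the semigroup under composition of all maps $X\to X$ fixing $0_X$, with zero the constant map to $0_X$. $\mathcal T(X)_\alpha=\{\psi\in\mathcal T'(X):\psi(X_\beta)\subseteq X_{\alpha\beta}\text{ for all }\beta\in\Gamma\}$ and $\mathcal T^{\mathrm{gr}}(X)=\bigcup_{\alpha}\mathcal T(X)_\alpha$, a $\Gamma$-graded subsemigroup of $\mathcal T'(X)$ with components $\mathcal T(X)_\alpha$. *)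

theory Defs
  imports "HOL-Algebra.Group" "HOL-Library.FuncSet"
begin

definition semigroup0 :: "'s set \<Rightarrow> ('s \<Rightarrow> 's \<Rightarrow> 's) \<Rightarrow> 's \<Rightarrow> bool" where
  "semigroup0 S m z \<longleftrightarrow>
     z \<in> S \<and>
     (\<forall>s\<in>S. \<forall>t\<in>S. m s t \<in> S) \<and>
     (\<forall>s\<in>S. \<forall>t\<in>S. \<forall>u\<in>S. m (m s t) u = m s (m t u)) \<and>
     (\<forall>s\<in>S. m z s = z \<and> m s z = z)"

definition graded_semigroup ::
  "('g, 'b) monoid_scheme \<Rightarrow> 's set \<Rightarrow> ('s \<Rightarrow> 's \<Rightarrow> 's) \<Rightarrow> 's \<Rightarrow> ('s \<Rightarrow> 'g) \<Rightarrow> bool" where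
  "graded_semigroup G S m z deg \<longleftrightarrow>
     semigroup0 S m z \<and>
     (\<forall>s\<in>S - {z}. deg s \<in> carrier G) \<and>
     (\<forall>s\<in>S - {z}. \<forall>t\<in>S - {z}. m s t \<noteq> z \<longrightarrow> deg (m s t) = deg s \<otimes>\<^bsub>G\<^esub> deg t)"

definition graded_comp :: "'s set \<Rightarrow> 's \<Rightarrow> ('s \<Rightarrow> 'g) \<Rightarrow> 'g \<Rightarrow> 's set" where
  "graded_comp S z deg \<alpha> = {s \<in> S - {z}. deg s = \<alpha>} \<union> {z}"

definition graded_pointed_set ::
  "('g, 'b) monoid_scheme \<Rightarrow> 'x set \<Rightarrow> 'x \<Rightarrow> ('x \<Rightarrow> 'g) \<Rightarrow> bool" where
  "graded_pointed_set G X x0 \<phi> \<longleftrightarrow> x0 \<in> X \<and> (\<forall>x\<in>X - {x0}. \<phi> x \<in> carrier G)"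

definition Tprime :: "'x set \<Rightarrow> 'x \<Rightarrow> ('x \<Rightarrow> 'x) set" where
  "Tprime X x0 = {f \<in> X \<rightarrow>\<^sub>E X. f x0 = x0}"

definition Tzero :: "'x set \<Rightarrow> 'x \<Rightarrow> ('x \<Rightarrow> 'x)" where
  "Tzero X x0 = (\<lambda>x\<in>X. x0)"

definition Tcomp ::
  "('g, 'b) monoid_scheme \<Rightarrow> 'x set \<Rightarrow> 'x \<Rightarrow> ('x \<Rightarrow> 'g) \<Rightarrow> 'g \<Rightarrow> ('x \<Rightarrow> 'x) set" where
  "Tcomp G X x0 \<phi> \<alpha> = {f \<in> Tprime X x0.
      \<forall>\<beta>\<in>carrier G. f ` (graded_comp X x0 \<phi> \<beta>) \<subseteq> graded_comp X x0 \<phi> (\<alpha> \<otimes>\<^bsub>G\<^esub> \<beta>)}"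

definition Tgr ::
  "('g, 'b) monoid_scheme \<Rightarrow> 'x set \<Rightarrow> 'x \<Rightarrow> ('x \<Rightarrow> 'g) \<Rightarrow> ('x \<Rightarrow> 'x) set" where
  "Tgr G X x0 \<phi> = (\<Union>\<alpha>\<in>carrier G. Tcomp G X x0 \<phi> \<alpha>)"

end

theory Submission
  imports Defs
begin

theorem proposition2p5:
  fixes G :: "('g, 'b) monoid_scheme"
    and S :: "'s set" and m :: "'s \<Rightarrow> 's \<Rightarrow> 's" and z :: 's and deg :: "'s \<Rightarrow> 'g"
  assumes "group G"
    and "graded_semigroup G S m z deg"
  shows "\<exists>(X :: ('s option \<times> 'g) set) x0 \<phi> \<psi>.
           graded_pointed_set G X x0 \<phi> \<and>
           (\<forall>s\<in>S. \<psi> s \<in> Tgr G X x0 \<phi>) \<and>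
           inj_on \<psi> S \<and>
           (\<forall>s\<in>S. \<forall>t\<in>S. \<psi> (m s t) = compose X (\<psi> s) (\<psi> t)) \<and>
           \<psi> z = Tzero X x0 \<and>
           (\<forall>\<alpha>\<in>carrier G. \<psi> ` (graded_comp S z deg \<alpha>) \<subseteq> Tcomp G X x0 \<phi> \<alpha>)"
proof -
  interpret group G by (rule assms(1))
  have zS: "z \<in> S" and cl: "\<And>s t. s \<in> S \<Longrightarrow> t \<in> S \<Longrightarrow> m s t \<in> S"
    and asc: "\<And>s t u. s \<in> S \<Longrightarrow> t \<in> S \<Longrightarrow> u \<in> S \<Longrightarrow> m (m s t) u = m s (m t u)"
    and zl: "\<And>s. s \<in> S \<Longrightarrow> m z s = z" and zr: "\<And>s. s \<in> S \<Longrightarrow> m s z = z"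
    and dG: "\<And>s. s \<in> S \<Longrightarrow> s \<noteq> z \<Longrightarrow> deg s \<in> carrier G"
    and dm: "\<And>s t. s \<in> S \<Longrightarrow> t \<in> S \<Longrightarrow> s \<noteq> z \<Longrightarrow> t \<noteq> z \<Longrightarrow> m s t \<noteq> z
               \<Longrightarrow> deg (m s t) = deg s \<otimes>\<^bsub>G\<^esub> deg t"
    using assms(2) unfolding graded_semigroup_def semigroup0_def by auto
  define X :: "('s option \<times> 'g) set" where
    "X = {(Some s, \<one>\<^bsub>G\<^esub>) | s. s \<in> S} \<union> {(None, \<one>\<^bsub>G\<^esub>)}"
  define x0 where "x0 = (Some z, \<one>\<^bsub>G\<^esub>)"
  define \<phi> :: "'s option \<times> 'g \<Rightarrow> 'g" where
    "\<phi> x = (case fst x of None \<Rightarrow> \<one>\<^bsub>G\<^esub> | Some s \<Rightarrow> deg s)" for x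
  define \<psi> :: "'s \<Rightarrow> 's option \<times> 'g \<Rightarrow> 's option \<times> 'g" where
    "\<psi> s = (\<lambda>x\<in>X. case fst x of None \<Rightarrow> (Some s, \<one>\<^bsub>G\<^esub>) | Some t \<Rightarrow> (Some (m s t), \<one>\<^bsub>G\<^esub>))" for s
  have x0X: "x0 \<in> X" using zS unfolding X_def x0_def by auto
  have gp: "graded_pointed_set G X x0 \<phi>"
    unfolding graded_pointed_set_def using x0X dG
    apply (auto simp: X_def x0_def \<phi>_def) using dG by blast
  have psiX: "\<psi> s x \<in> X" if "s \<in> S" "x \<in> X" for s x
    using that cl unfolding \<psi>_def X_def by auto
  have comp: "\<psi> (m s t) = compose X (\<psi> s) (\<psi> t)" if "s \<in> S" "t \<in> S" for s t
  proof
    fix x show "\<psi> (m s t) x = compose X (\<psi> s) (\<psi> t) x"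
    proof (cases "x \<in> X")
      case True
      then have "\<psi> t x \<in> X" using psiX that by auto
      then show ?thesis using True that asc cl unfolding compose_def \<psi>_def X_def by auto
    next
      case False then show ?thesis unfolding compose_def \<psi>_def by auto
    qed
  qed
  have psiz: "\<psi> z = Tzero X x0"
    unfolding \<psi>_def Tzero_def x0_def X_def using zl by (auto intro!: ext)
  have inj: "inj_on \<psi> S"
  proof (rule inj_onI)
    fix s t assume "s \<in> S" "t \<in> S" "\<psi> s = \<psi> t"
    then have "\<psi> s (None, \<one>\<^bsub>G\<^esub>) = \<psi> t (None, \<one>\<^bsub>G\<^esub>)" by simp
    then show "s = t" unfolding \<psi>_def X_def by auto
  qed
  have Tc: "\<psi> s \<in> Tcomp G X x0 \<phi> \<alpha>" if a: "\<alpha> \<in> carrier G" and s: "s \<in> graded_comp S z deg \<alpha>" for s \<alpha>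
  proof -
    have sS: "s \<in> S" and sd: "s \<noteq> z \<Longrightarrow> deg s = \<alpha>" using s zS unfolding graded_comp_def by auto
    have "\<psi> s \<in> Tprime X x0"
      unfolding Tprime_def using psiX[OF sS] sS zr zS
      by (auto simp: \<psi>_def x0_def X_def)
    moreover have "\<psi> s ` graded_comp X x0 \<phi> \<beta> \<subseteq> graded_comp X x0 \<phi> (\<alpha> \<otimes>\<^bsub>G\<^esub> \<beta>)"
      if b: "\<beta> \<in> carrier G" for \<beta>
    proof
      fix y assume "y \<in> \<psi> s ` graded_comp X x0 \<phi> \<beta>"
      then obtain x where xin: "x \<in> graded_comp X x0 \<phi> \<beta>" and y: "y = \<psi> s x" by auto
      have xX: "x \<in> X" using xin x0X unfolding graded_comp_def by auto
      have yX: "y \<in> X" using psiX[OF sS xX] y by simp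
      show "y \<in> graded_comp X x0 \<phi> (\<alpha> \<otimes>\<^bsub>G\<^esub> \<beta>)"
      proof (cases "y = x0")
        case True then show ?thesis unfolding graded_comp_def by auto
      next
        case yn: False
        show ?thesis
        proof (cases "x = x0")
          case True
          then have "y = x0" using y x0X zr sS unfolding \<psi>_def x0_def by auto
          then show ?thesis using yn by auto
        next
          case xn: False
          then have px: "\<phi> x = \<beta>" using xin unfolding graded_comp_def by auto
          from xX consider "x = (None, \<one>\<^bsub>G\<^esub>)" | t where "t \<in> S" "x = (Some t, \<one>\<^bsub>G\<^esub>)"
            unfolding X_def by auto
          then show ?thesis
          proof cases
            case 1
            then have yy: "y = (Some s, \<one>\<^bsub>G\<^esub>)" using y xX unfolding \<psi>_def by auto
            then have "s \<noteq> z" using yn x0_def by auto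
            moreover have "\<beta> = \<one>\<^bsub>G\<^esub>" using px 1 \<phi>_def by simp
            ultimately have "\<phi> y = \<alpha> \<otimes>\<^bsub>G\<^esub> \<beta>" using sd yy a \<phi>_def by simp
            then show ?thesis using yX yn unfolding graded_comp_def by auto
          next
            case 2
            then have yy: "y = (Some (m s t), \<one>\<^bsub>G\<^esub>)" using y xX unfolding \<psi>_def by auto
            then have mn: "m s t \<noteq> z" using yn x0_def by auto
            have tz: "t \<noteq> z" using xn 2 x0_def by auto
            have sz: "s \<noteq> z" using mn zl 2 by auto
            have "\<phi> x = deg t" using 2 \<phi>_def by simp
            then have "\<phi> y = \<alpha> \<otimes>\<^bsub>G\<^esub> \<beta>" using dm[OF sS \<open>t \<in> S\<close> sz tz mn] sd[OF sz] px yy \<phi>_def by simp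
            then show ?thesis using yX yn unfolding graded_comp_def by auto
          qed
        qed
      qed
    qed
    ultimately show ?thesis unfolding Tcomp_def by auto
  qed
  have Tg: "\<psi> s \<in> Tgr G X x0 \<phi>" if sS: "s \<in> S" for s
  proof -
    let ?a = "if s = z then \<one>\<^bsub>G\<^esub> else deg s"
    have a: "?a \<in> carrier G" using dG sS by auto
    have "s \<in> graded_comp S z deg ?a" using sS unfolding graded_comp_def by auto
    then show ?thesis using Tc[OF a] a unfolding Tgr_def by blast
  qed
  show ?thesis
    apply (rule exI[of _ X], rule exI[of _ x0], rule exI[of _ \<phi>], rule exI[of _ \<psi>])
    using gp Tg inj comp psiz Tc by blast
qed

end
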